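(* Every Hausdorff and compact $\mathbb{B}$-topological space is normal; every regular and compact $\mathbb{B}$-topological space is normal.
   Context: $\mathbb{B}=\{0,1,tt,ff\}$ is the four-element Boolean algebra with bottom $0$, top $1$, and $tt,ff$ incomparable complements; $\neg$ its complement, $a\to b=\neg a\vee b$. A $\mathbb{B}$-topology on $X$ is $\tau\subseteq\mathbb{B}^X$ containing all constant maps and closed under arbitrary pointwise joins and finite pointwise meets; $\mu$ is closed if $\neg\mu\in\tau$; $\overline{\nu}$ is the meet of all closed sets $\ge\nu$. $\mathrm{sub}_X(\lambda,\mu)=\bigwedge_x(\lambda(x)\to\mu(x))$. $(X,\tau)$ is compact if the constant map $1_X$ satisfies $\mathrm{sub}_X(1_X,\bigvee\Lambda)=\bigvee_{\lambda\in\Lambda}\mathrm{sub}_X(1_X,\lambda)$ for every directed $\Lambda\subseteq\tau$. Specialization $\mathbb{B}$-order: $\Omega(\tau)(x,y)=\bigwedge_{\lambda\in\tau}(\lambda(x)\to\lambda(y))$. The product $(X,\tau)\times(X,\tau)$ is $X\times X$ with the $\mathbb{B}$-topology generated by the constants and $\{\lambda\circ\pi_1,\lambda\circ\pi_2:\lambda\in\tau\}$. $(X,\tau)$ is $T_0$ if $\Omega(\tau)(x,y)=1=\Omega(\tau)(y,x)$ implies $x=y$; $R_1$ if $\Omega(\tau)$ is closed in $(X,\tau)\times(X,\tau)$; Hausdorff if $T_0$ and $R_1$; regular if every $\lambda\in\tau$ equals $\bigvee\{\mu\in\tau:\overline{\mu}\le\lambda\}$; normal if for every open $\lambda$ and closed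 $\mu$ with $\mu\le\lambda$ there is an open $\nu$ with $\mu\le\nu\le\overline{\nu}\le\lambda$. *)

theory Defs
  imports Main "HOL-Library.Product_Order"
begin

text \<open>The four-element Boolean algebra B = {0,1,tt,ff}, realised as bool \<times> bool with the
componentwise (product) order: 0 = (False,False), 1 = (True,True),
tt = (True,False), ff = (False,True).\<close>

type_synonym B4 = "bool \<times> bool"

definition Btt :: B4 where "Btt = (True, False)"
definition Bff :: B4 where "Bff = (False, True)"

definition Bimp :: "B4 \<Rightarrow> B4 \<Rightarrow> B4" where
  "Bimp a b = sup (- a) b"

text \<open>B-topology on the underlying set X (= UNIV of type 'a); B-valued maps are 'a \<Rightarrow> B4,
with pointwise order, joins (Sup) and meets (inf).\<close>
definition is_Btop :: "('a \<Rightarrow> B4) set \<Rightarrow> bool" where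
  "is_Btop \<tau> \<longleftrightarrow> (\<forall>c. (\<lambda>_. c) \<in> \<tau>) \<and> (\<forall>S. S \<subseteq> \<tau> \<longrightarrow> Sup S \<in> \<tau>)
      \<and> (\<forall>l\<in>\<tau>. \<forall>m\<in>\<tau>. inf l m \<in> \<tau>)"

definition Bclosed :: "('a \<Rightarrow> B4) set \<Rightarrow> ('a \<Rightarrow> B4) \<Rightarrow> bool" where
  "Bclosed \<tau> m \<longleftrightarrow> - m \<in> \<tau>"

definition Bclosure :: "('a \<Rightarrow> B4) set \<Rightarrow> ('a \<Rightarrow> B4) \<Rightarrow> ('a \<Rightarrow> B4)" where
  "Bclosure \<tau> v = Inf {m. Bclosed \<tau> m \<and> v \<le> m}"

definition Bsub :: "('a \<Rightarrow> B4) \<Rightarrow> ('a \<Rightarrow> B4) \<Rightarrow> B4" where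
  "Bsub l m = (INF x. Bimp (l x) (m x))"

definition Bdirected :: "('a \<Rightarrow> B4) set \<Rightarrow> bool" where
  "Bdirected L \<longleftrightarrow> L \<noteq> {} \<and> (\<forall>a\<in>L. \<forall>b\<in>L. \<exists>c\<in>L. a \<le> c \<and> b \<le> c)"

definition Bcompact :: "('a \<Rightarrow> B4) set \<Rightarrow> bool" where
  "Bcompact \<tau> \<longleftrightarrow> (\<forall>L. L \<subseteq> \<tau> \<longrightarrow> Bdirected L \<longrightarrow>
      Bsub (\<lambda>_. top) (Sup L) = (SUP l\<in>L. Bsub (\<lambda>_. top) l))"

definition Bspec :: "('a \<Rightarrow> B4) set \<Rightarrow> 'a \<Rightarrow> 'a \<Rightarrow> B4" where
  "Bspec \<tau> x y = (INF l\<in>\<tau>. Bimp (l x) (l y))"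

definition Bgenerated :: "('a \<Rightarrow> B4) set \<Rightarrow> ('a \<Rightarrow> B4) set" where
  "Bgenerated S = \<Inter> {T. is_Btop T \<and> S \<subseteq> T}"

definition Bprod_top :: "('a \<Rightarrow> B4) set \<Rightarrow> ('a \<times> 'a \<Rightarrow> B4) set" where
  "Bprod_top \<tau> = Bgenerated ({(\<lambda>_. c) | c. True}
      \<union> {l \<circ> fst | l. l \<in> \<tau>} \<union> {l \<circ> snd | l. l \<in> \<tau>})"

definition BT0 :: "('a \<Rightarrow> B4) set \<Rightarrow> bool" where
  "BT0 \<tau> \<longleftrightarrow> (\<forall>x y. Bspec \<tau> x y = top \<and> Bspec \<tau> y x = top \<longrightarrow> x = y)"

definition BR1 :: "('a \<Rightarrow> B4) set \<Rightarrow> bool" where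
  "BR1 \<tau> \<longleftrightarrow> Bclosed (Bprod_top \<tau>) (\<lambda>(x, y). Bspec \<tau> x y)"

definition BHausdorff :: "('a \<Rightarrow> B4) set \<Rightarrow> bool" where
  "BHausdorff \<tau> \<longleftrightarrow> BT0 \<tau> \<and> BR1 \<tau>"

definition Bregular :: "('a \<Rightarrow> B4) set \<Rightarrow> bool" where
  "Bregular \<tau> \<longleftrightarrow> (\<forall>l\<in>\<tau>. l = Sup {m \<in> \<tau>. Bclosure \<tau> m \<le> l})"

definition Bnormal :: "('a \<Rightarrow> B4) set \<Rightarrow> bool" where
  "Bnormal \<tau> \<longleftrightarrow> (\<forall>l m. l \<in> \<tau> \<longrightarrow> Bclosed \<tau> m \<longrightarrow> m \<le> l \<longrightarrow>
      (\<exists>v\<in>\<tau>. m \<le> v \<and> v \<le> Bclosure \<tau> v \<and> Bclosure \<tau> v \<le> l))"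

end

theory Submission
  imports Defs
begin


definition PI :: "(B4 \<Rightarrow> bool) \<Rightarrow> bool" where "PI p \<longleftrightarrow> p = fst \<or> p = snd"

lemma PI_Sup: "PI p \<Longrightarrow> p (Sup A) = (\<exists>a\<in>A. p a)"
  unfolding PI_def by (auto simp: fst_Sup snd_Sup; force)
lemma PI_Inf: "PI p \<Longrightarrow> p (Inf A) = (\<forall>a\<in>A. p a)"
  unfolding PI_def by (auto simp: fst_Inf snd_Inf; force)
lemma PI_inf: "PI p \<Longrightarrow> p (inf a b) = (p a \<and> p b)"
  unfolding PI_def by auto
lemma PI_sup: "PI p \<Longrightarrow> p (sup a b) = (p a \<or> p b)"
  unfolding PI_def by auto
lemma PI_neg: "PI p \<Longrightarrow> p (- a) = (\<not> p a)"
  unfolding PI_def by auto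
lemma PI_top: "PI p \<Longrightarrow> p top"
  unfolding PI_def by auto
lemma PI_mono: "PI p \<Longrightarrow> a \<le> b \<Longrightarrow> p a \<Longrightarrow> p b"
  unfolding PI_def by (auto simp: less_eq_prod_def)

definition opn :: "('a \<Rightarrow> B4) set \<Rightarrow> (B4 \<Rightarrow> bool) \<Rightarrow> 'a set \<Rightarrow> bool" where
  "opn \<tau> p U \<longleftrightarrow> (\<exists>l\<in>\<tau>. U = {x. p (l x)})"

lemma opn_Union:
  assumes t: "is_Btop \<tau>" and p: "PI p" and h: "\<forall>U\<in>\<U>. opn \<tau> p U"
  shows "opn \<tau> p (\<Union>\<U>)"
proof -
  from h have "\<forall>U\<in>\<U>. \<exists>l. l \<in> \<tau> \<and> U = {x. p (l x)}" unfolding opn_def by blast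
  then have "\<exists>l. \<forall>U\<in>\<U>. l U \<in> \<tau> \<and> U = {x. p (l U x)}" by (rule bchoice)
  then obtain l where l: "\<forall>U\<in>\<U>. l U \<in> \<tau> \<and> U = {x. p (l U x)}" by blast
  have "l ` \<U> \<subseteq> \<tau>" using l by blast
  then have "Sup (l ` \<U>) \<in> \<tau>" using t unfolding is_Btop_def by blast
  moreover have "p (Sup (l ` \<U>) x) \<longleftrightarrow> (\<exists>U\<in>\<U>. p (l U x))" for x
    by (simp add: Sup_apply PI_Sup[OF p] image_image)
  moreover have "x \<in> \<Union>\<U> \<longleftrightarrow> (\<exists>U\<in>\<U>. p (l U x))" for x
  proof
    assume "x \<in> \<Union>\<U>" then obtain U where "U \<in> \<U>" "x \<in> U" by blast
    with l have "p (l U x)" by blast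
    with \<open>U \<in> \<U>\<close> show "\<exists>U\<in>\<U>. p (l U x)" by blast
  next
    assume "\<exists>U\<in>\<U>. p (l U x)" then obtain U where "U \<in> \<U>" "p (l U x)" by blast
    with l have "x \<in> U" by blast
    with \<open>U \<in> \<U>\<close> show "x \<in> \<Union>\<U>" by blast
  qed
  ultimately show ?thesis unfolding opn_def by blast
qed

lemma opn_Int:
  assumes t: "is_Btop \<tau>" and p: "PI p" and "opn \<tau> p U" "opn \<tau> p V"
  shows "opn \<tau> p (U \<inter> V)"
proof -
  obtain a b where "a \<in> \<tau>" "b \<in> \<tau>" "U = {x. p (a x)}" "V = {x. p (b x)}"
    using assms unfolding opn_def by blast
  moreover have "inf a b \<in> \<tau>" using t calculation unfolding is_Btop_def by blast
  moreover have "U \<inter> V = {x. p (inf a b x)}" using calculation by (simp add: PI_inf[OF p] Collect_conj_eq)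
  ultimately show ?thesis unfolding opn_def by blast
qed

lemma opn_UNIV:
  assumes t: "is_Btop \<tau>" and p: "PI p"
  shows "opn \<tau> p UNIV"
proof -
  have "(\<lambda>_. top) \<in> \<tau>" using t unfolding is_Btop_def by blast
  then show ?thesis unfolding opn_def by (intro bexI[of _ "\<lambda>_. top"]) (auto simp: PI_top[OF p])
qed

lemma opn_Inter:
  assumes t: "is_Btop \<tau>" and p: "PI p" and f: "finite \<U>" and h: "\<forall>U\<in>\<U>. opn \<tau> p U"
  shows "opn \<tau> p (\<Inter>\<U>)"
  using f h
proof (induction \<U> rule: finite_induct)
  case empty then show ?case using opn_UNIV[OF t p] by simp
next
  case (insert U F) then show ?case using opn_Int[OF t p] by simp
qed

definition compactc :: "('a \<Rightarrow> B4) set \<Rightarrow> (B4 \<Rightarrow> bool) \<Rightarrow> bool" where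
  "compactc \<tau> p \<longleftrightarrow> (\<forall>f::'a \<Rightarrow> 'a set. (\<forall>i. opn \<tau> p (f i)) \<longrightarrow> (\<forall>x. \<exists>i. x \<in> f i)
      \<longrightarrow> (\<exists>J. finite J \<and> (\<forall>x. \<exists>i\<in>J. x \<in> f i)))"

definition regularc :: "('a \<Rightarrow> B4) set \<Rightarrow> (B4 \<Rightarrow> bool) \<Rightarrow> bool" where
  "regularc \<tau> p \<longleftrightarrow> (\<forall>W x. opn \<tau> p W \<longrightarrow> x \<in> W \<longrightarrow>
     (\<exists>V C. opn \<tau> p V \<and> opn \<tau> p (- C) \<and> x \<in> V \<and> V \<subseteq> C \<and> C \<subseteq> W))"

definition normalc :: "('a \<Rightarrow> B4) set \<Rightarrow> (B4 \<Rightarrow> bool) \<Rightarrow> bool" where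
  "normalc \<tau> p \<longleftrightarrow> (\<forall>W F. opn \<tau> p W \<longrightarrow> opn \<tau> p (- F) \<longrightarrow> F \<subseteq> W \<longrightarrow>
     (\<exists>V C. opn \<tau> p V \<and> opn \<tau> p (- C) \<and> F \<subseteq> V \<and> V \<subseteq> C \<and> C \<subseteq> W))"

lemma regular_compact_normal:
  assumes t: "is_Btop \<tau>" and p: "PI p" and c: "compactc \<tau> p" and r: "regularc \<tau> p"
  shows "normalc \<tau> p"
  unfolding normalc_def
proof (intro allI impI)
  fix W F :: "'a set"
  assume W: "opn \<tau> p W" and F: "opn \<tau> p (- F)" and FW: "F \<subseteq> W"
  have "\<forall>x. \<exists>vc. x \<in> F \<longrightarrow> opn \<tau> p (fst vc) \<and> opn \<tau> p (- snd vc) \<and> x \<in> fst vc \<and> fst vc \<subseteq> snd vc \<and> snd vc \<subseteq> W"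
    using r W FW unfolding regularc_def by fastforce
  then have "\<exists>vc. \<forall>x. x \<in> F \<longrightarrow> opn \<tau> p (fst (vc x)) \<and> opn \<tau> p (- snd (vc x)) \<and> x \<in> fst (vc x) \<and> fst (vc x) \<subseteq> snd (vc x) \<and> snd (vc x) \<subseteq> W"
    by (rule choice)
  then obtain vc where vc: "\<forall>x. x \<in> F \<longrightarrow> opn \<tau> p (fst (vc x)) \<and> opn \<tau> p (- snd (vc x)) \<and> x \<in> fst (vc x) \<and> fst (vc x) \<subseteq> snd (vc x) \<and> snd (vc x) \<subseteq> W"
    by blast
  define V where "V x = fst (vc x)" for x
  define C where "C x = snd (vc x)" for x
  have VC: "\<And>x. x \<in> F \<Longrightarrow> opn \<tau> p (V x) \<and> opn \<tau> p (- C x) \<and> x \<in> V x \<and> V x \<subseteq> C x \<and> C x \<subseteq> W"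
    using vc unfolding V_def C_def by blast
  define g where "g x = (if x \<in> F then V x else - F)" for x
  have g1: "\<forall>i. opn \<tau> p (g i)" using VC F by (simp add: g_def)
  have g2: "\<forall>x. \<exists>i. x \<in> g i"
  proof
    fix x show "\<exists>i. x \<in> g i" using VC[of x] by (intro exI[of _ x]) (auto simp: g_def)
  qed
  obtain J where J: "finite J" "\<forall>x. \<exists>i\<in>J. x \<in> g i"
    using c[unfolded compactc_def, rule_format, of g] g1 g2 by blast
  define VV where "VV = \<Union>(V ` (J \<inter> F))"
  define CC where "CC = \<Union>(C ` (J \<inter> F))"
  have "opn \<tau> p VV" unfolding VV_def using VC by (intro opn_Union[OF t p]) auto
  moreover have "- CC = \<Inter>((\<lambda>x. - C x) ` (J \<inter> F))" unfolding CC_def by auto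
  hence "opn \<tau> p (- CC)" using VC J(1) by (auto intro!: opn_Inter[OF t p])
  moreover have "F \<subseteq> VV"
  proof
    fix y assume "y \<in> F"
    then obtain i where "i \<in> J" "y \<in> g i" using J by blast
    then show "y \<in> VV" using \<open>y \<in> F\<close> unfolding VV_def g_def by (auto split: if_splits)
  qed
  moreover have "VV \<subseteq> CC" using VC unfolding VV_def CC_def by blast
  moreover have "CC \<subseteq> W" using VC unfolding CC_def by blast
  ultimately show "\<exists>V C. opn \<tau> p V \<and> opn \<tau> p (- C) \<and> F \<subseteq> V \<and> V \<subseteq> C \<and> C \<subseteq> W" by (intro exI conjI)
qed



lemma opn_iff: "opn \<tau> p U \<longleftrightarrow> (\<exists>l\<in>\<tau>. \<forall>x. x \<in> U \<longleftrightarrow> p (l x))"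
  unfolding opn_def by (auto simp: set_eq_iff)

lemma Bsub_top: "Bsub (\<lambda>_. top) l = (INF x. l x)"
  unfolding Bsub_def Bimp_def by simp

lemma PI_INF: "PI p \<Longrightarrow> p (INF x\<in>A. f x) = (\<forall>x\<in>A. p (f x))"
  using PI_Inf[of p "f ` A"] by simp
lemma PI_SUP: "PI p \<Longrightarrow> p (SUP x\<in>A. f x) = (\<exists>x\<in>A. p (f x))"
  using PI_Sup[of p "f ` A"] by simp

lemma compact_comp:
  assumes t: "is_Btop \<tau>" and p: "PI p" and c: "Bcompact \<tau>"
  shows "compactc \<tau> p"
  unfolding compactc_def
proof (intro allI impI)
  fix f :: "'a \<Rightarrow> 'a set"
  assume fo: "\<forall>i. opn \<tau> p (f i)" and cov: "\<forall>x. \<exists>i. x \<in> f i"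
  have "\<forall>i. \<exists>l. l \<in> \<tau> \<and> (\<forall>x. x \<in> f i \<longleftrightarrow> p (l x))" using fo unfolding opn_iff by blast
  then have "\<exists>h. \<forall>i. h i \<in> \<tau> \<and> (\<forall>x. x \<in> f i \<longleftrightarrow> p (h i x))" by (rule choice)
  then obtain h where h: "\<And>i. h i \<in> \<tau>" "\<And>i x. x \<in> f i \<longleftrightarrow> p (h i x)" by blast
  define L where "L = {Sup (h ` J) | J. finite J}"
  have Lt: "L \<subseteq> \<tau>"
  proof
    fix l assume "l \<in> L"
    then obtain J where "l = Sup (h ` J)" unfolding L_def by blast
    moreover have "h ` J \<subseteq> \<tau>" using h by blast
    ultimately show "l \<in> \<tau>" using t unfolding is_Btop_def by blast
  qed
  have Ld: "Bdirected L"
    unfolding Bdirected_def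
  proof (intro conjI ballI)
    show "L \<noteq> {}" unfolding L_def by blast
  next
    fix a b assume "a \<in> L" "b \<in> L"
    then obtain J1 J2 where "a = Sup (h ` J1)" "b = Sup (h ` J2)" "finite J1" "finite J2"
      unfolding L_def by blast
    moreover have "Sup (h ` (J1 \<union> J2)) \<in> L" using calculation unfolding L_def by blast
    ultimately show "\<exists>c\<in>L. a \<le> c \<and> b \<le> c"
      by (intro bexI[of _ "Sup (h ` (J1 \<union> J2))"]) (auto intro!: Sup_subset_mono)
  qed
  have eq: "Bsub (\<lambda>_. top) (Sup L) = (SUP l\<in>L. Bsub (\<lambda>_. top) l)"
    using c Lt Ld unfolding Bcompact_def by blast
  have "\<forall>x. p (Sup L x)"
  proof
    fix x obtain i where "x \<in> f i" using cov by blast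
    then have "p (h i x)" using h by blast
    moreover have "h i \<in> L" unfolding L_def by (intro CollectI exI[of _ "{i}"]) simp
    ultimately show "p (Sup L x)" by (auto simp: Sup_apply PI_SUP[OF p])
  qed
  then have "p (Bsub (\<lambda>_. top) (Sup L))" by (simp add: Bsub_top PI_INF[OF p])
  then have "\<exists>l\<in>L. \<forall>x. p (l x)" unfolding eq by (simp add: Bsub_top PI_INF[OF p] PI_SUP[OF p])
  then obtain J where J: "finite J" "\<forall>x. p (Sup (h ` J) x)" unfolding L_def by blast
  have "\<forall>x. \<exists>i\<in>J. x \<in> f i"
  proof
    fix x have "p (Sup (h ` J) x)" using J by blast
    then show "\<exists>i\<in>J. x \<in> f i" using h by (simp add: Sup_apply PI_SUP[OF p] image_image)
  qed
  then show "\<exists>J. finite J \<and> (\<forall>x. \<exists>i\<in>J. x \<in> f i)" using J(1) by blast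
qed



definition Pc :: "('a \<Rightarrow> B4) set \<Rightarrow> (B4 \<Rightarrow> bool) \<Rightarrow> ('a \<times> 'a \<Rightarrow> B4) \<Rightarrow> bool" where
  "Pc \<tau> p f \<longleftrightarrow> (\<forall>a b. p (f (a, b)) \<longrightarrow> (\<exists>u\<in>\<tau>. \<exists>v\<in>\<tau>. p (u a) \<and> p (v b) \<and>
      (\<forall>c d. p (u c) \<and> p (v d) \<longrightarrow> p (f (c, d)))))"

lemma Pc_top:
  assumes t: "is_Btop \<tau>" and p: "PI p"
  shows "is_Btop {f. Pc \<tau> p f}"
proof -
  have top: "(\<lambda>_. top) \<in> \<tau>" using t unfolding is_Btop_def by blast
  have ptop: "p top" using PI_top[OF p] .
  have c1: "Pc \<tau> p (\<lambda>_. c)" for c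
    unfolding Pc_def using top ptop by (intro allI impI bexI[of _ "\<lambda>_. top"]) auto
  have c2: "Pc \<tau> p (Sup S)" if "S \<subseteq> {f. Pc \<tau> p f}" for S
    unfolding Pc_def
  proof (intro allI impI)
    fix a b assume "p (Sup S (a, b))"
    then obtain f where f: "f \<in> S" "p (f (a, b))" by (auto simp: Sup_apply PI_SUP[OF p])
    then have "Pc \<tau> p f" using that by blast
    then obtain u v where uv: "u \<in> \<tau>" "v \<in> \<tau>" "p (u a)" "p (v b)"
        "\<forall>c d. p (u c) \<and> p (v d) \<longrightarrow> p (f (c, d))"
      using f unfolding Pc_def by blast
    have "p (f (c, d)) \<Longrightarrow> p (Sup S (c, d))" for c d
      using f(1) by (auto simp: Sup_apply PI_SUP[OF p])
    then show "\<exists>u\<in>\<tau>. \<exists>v\<in>\<tau>. p (u a) \<and> p (v b) \<and> (\<forall>c d. p (u c) \<and> p (v d) \<longrightarrow> p (Sup S (c, d)))"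
      using uv by blast
  qed
  have c3: "Pc \<tau> p (inf f g)" if hfg: "Pc \<tau> p f" "Pc \<tau> p g" for f g
    unfolding Pc_def
  proof (intro allI impI)
    fix a b assume "p (inf f g (a, b))"
    then have "p (f (a, b))" "p (g (a, b))" by (simp_all add: PI_inf[OF p])
    note fa = this
    obtain u v where uv: "u \<in> \<tau>" "v \<in> \<tau>" "p (u a)" "p (v b)"
        "\<forall>c d. p (u c) \<and> p (v d) \<longrightarrow> p (f (c, d))"
      using hfg(1)[unfolded Pc_def, rule_format, OF fa(1)] by blast
    obtain u' v' where uv': "u' \<in> \<tau>" "v' \<in> \<tau>" "p (u' a)" "p (v' b)"
        "\<forall>c d. p (u' c) \<and> p (v' d) \<longrightarrow> p (g (c, d))"
      using hfg(2)[unfolded Pc_def, rule_format, OF fa(2)] by blast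
    have "inf u u' \<in> \<tau>" "inf v v' \<in> \<tau>" using t uv uv' unfolding is_Btop_def by blast+
    then show "\<exists>u\<in>\<tau>. \<exists>v\<in>\<tau>. p (u a) \<and> p (v b) \<and> (\<forall>c d. p (u c) \<and> p (v d) \<longrightarrow> p (inf f g (c, d)))"
      using uv uv' by (intro bexI[of _ "inf u u'"] bexI[of _ "inf v v'"]) (auto simp: PI_inf[OF p])
  qed
  show ?thesis unfolding is_Btop_def using c1 c2 c3 by blast
qed

lemma prod_Pc:
  assumes t: "is_Btop \<tau>" and p: "PI p" and f: "f \<in> Bprod_top \<tau>"
  shows "Pc \<tau> p f"
proof -
  have top: "(\<lambda>_. top) \<in> \<tau>" using t unfolding is_Btop_def by blast
  have ptop: "p top" using PI_top[OF p] .
  have "({(\<lambda>_. c) | c. True} \<union> {l \<circ> fst | l. l \<in> \<tau>} \<union> {l \<circ> snd | l. l \<in> \<tau>}) \<subseteq> {f. Pc \<tau> p f}"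
  proof -
    have "Pc \<tau> p (\<lambda>_. c)" for c unfolding Pc_def using top ptop by (intro allI impI bexI[of _ "\<lambda>_. top"]) auto
    moreover have "Pc \<tau> p (l \<circ> fst)" if "l \<in> \<tau>" for l
      unfolding Pc_def using top ptop that by (intro allI impI bexI[of _ l] bexI[of _ "\<lambda>_. top"]) auto
    moreover have "Pc \<tau> p (l \<circ> snd)" if "l \<in> \<tau>" for l
      unfolding Pc_def using top ptop that by (intro allI impI bexI[of _ l] bexI[of _ "\<lambda>_. top"]) auto
    ultimately show ?thesis by blast
  qed
  then have "Bprod_top \<tau> \<subseteq> {f. Pc \<tau> p f}"
    unfolding Bprod_top_def Bgenerated_def using Pc_top[OF t p] by blast
  then show ?thesis using f by blast
qed



lemma PI_spec: "PI p \<Longrightarrow> p (Bspec \<tau> x y) \<longleftrightarrow> (\<forall>l\<in>\<tau>. p (l x) \<longrightarrow> p (l y))"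
  unfolding Bspec_def Bimp_def by (simp add: PI_INF PI_sup PI_neg)

lemma R1_regular:
  assumes t: "is_Btop \<tau>" and p: "PI p" and c: "compactc \<tau> p" and r: "BR1 \<tau>"
  shows "regularc \<tau> p"
  unfolding regularc_def
proof (intro allI impI)
  fix W x assume W: "opn \<tau> p W" and xW: "x \<in> W"
  define S where "S = (\<lambda>(x, y). Bspec \<tau> x y)"
  have P: "Pc \<tau> p (- S)"
    using r prod_Pc[OF t p] unfolding BR1_def Bclosed_def S_def by blast
  have negS: "p ((- S) (a, b)) \<longleftrightarrow> \<not> p (Bspec \<tau> a b)" for a b
    by (simp add: S_def PI_neg[OF p])
  obtain w where w: "w \<in> \<tau>" "\<And>z. z \<in> W \<longleftrightarrow> p (w z)" using W unfolding opn_iff by blast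
  have sep: "\<exists>u v. u \<in> \<tau> \<and> v \<in> \<tau> \<and> p (u x) \<and> p (v y) \<and> (\<forall>c d. p (u c) \<and> p (v d) \<longrightarrow> \<not> p (Bspec \<tau> c d))"
    if "y \<notin> W" for y
  proof -
    have "\<not> p (w y)" using w that by blast
    then have "\<not> p (Bspec \<tau> x y)" using w xW by (auto simp: PI_spec[OF p])
    then have "p ((- S) (x, y))" using negS by blast
    from P[unfolded Pc_def, rule_format, OF this] obtain u v where
      "u \<in> \<tau>" "v \<in> \<tau>" "p (u x)" "p (v y)" "\<forall>c d. p (u c) \<and> p (v d) \<longrightarrow> p ((- S) (c, d))"
      by blast
    then show ?thesis using negS by blast
  qed
  define Q where "Q y u v \<longleftrightarrow> (y \<notin> W \<longrightarrow> u \<in> \<tau> \<and> v \<in> \<tau> \<and> p (u x) \<and> p (v y) \<and> (\<forall>c d. p (u c) \<and> p (v d) \<longrightarrow> \<not> p (Bspec \<tau> c d)))" for y u v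
  have "\<forall>y. \<exists>u. \<exists>v. Q y u v" unfolding Q_def using sep by blast
  then have "\<exists>uf. \<forall>y. \<exists>v. Q y (uf y) v" by (rule choice)
  then obtain uf where "\<forall>y. \<exists>v. Q y (uf y) v" by blast
  then have "\<exists>vf. \<forall>y. Q y (uf y) (vf y)" by (rule choice)
  then obtain vf where Qf: "\<And>y. Q y (uf y) (vf y)" by blast
  define U where "U y = {z. p (uf y z)}" for y
  define V where "V y = {z. p (vf y z)}" for y
  have UV: "opn \<tau> p (U y) \<and> opn \<tau> p (V y) \<and> x \<in> U y \<and> y \<in> V y \<and> U y \<inter> V y = {}" if "y \<notin> W" for y
  proof -
    have q: "uf y \<in> \<tau>" "vf y \<in> \<tau>" "p (uf y x)" "p (vf y y)"
       "\<And>c d. p (uf y c) \<Longrightarrow> p (vf y d) \<Longrightarrow> \<not> p (Bspec \<tau> c d)"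
      using Qf[of y] that unfolding Q_def by blast+
    have "p (Bspec \<tau> z z)" for z by (simp add: PI_spec[OF p])
    then have "U y \<inter> V y = {}" using q(5) unfolding U_def V_def by blast
    moreover have "opn \<tau> p (U y)" "opn \<tau> p (V y)" using q unfolding U_def V_def opn_def by blast+
    ultimately show ?thesis using q unfolding U_def V_def by blast
  qed
  define g where "g y = (if y \<in> W then W else V y)" for y
  have g1: "\<forall>i. opn \<tau> p (g i)" using UV W by (simp add: g_def)
  have g2: "\<forall>y. \<exists>i. y \<in> g i"
  proof
    fix y show "\<exists>i. y \<in> g i" using UV[of y] by (intro exI[of _ y]) (auto simp: g_def)
  qed
  obtain J where J: "finite J" "\<forall>y. \<exists>i\<in>J. y \<in> g i"
    using c[unfolded compactc_def, rule_format, of g] g1 g2 by blast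
  define VV where "VV = \<Inter>(U ` (J - W))"
  define CC where "CC = - \<Union>(V ` (J - W))"
  have "opn \<tau> p VV" unfolding VV_def using UV J(1) by (intro opn_Inter[OF t p]) auto
  moreover have "- CC = \<Union>(V ` (J - W))" unfolding CC_def by simp
  hence "opn \<tau> p (- CC)" using UV by (auto intro!: opn_Union[OF t p])
  moreover have "x \<in> VV" using UV unfolding VV_def by blast
  moreover have "VV \<subseteq> CC" using UV unfolding VV_def CC_def by blast
  moreover have "CC \<subseteq> W"
  proof
    fix y assume "y \<in> CC"
    show "y \<in> W"
    proof (rule ccontr)
      assume "y \<notin> W"
      then obtain i where "i \<in> J" "y \<in> g i" using J by blast
      then show False using \<open>y \<in> CC\<close> \<open>y \<notin> W\<close> unfolding g_def CC_def by (auto split: if_splits)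
    qed
  qed
  ultimately show "\<exists>V C. opn \<tau> p V \<and> opn \<tau> p (- C) \<and> x \<in> V \<and> V \<subseteq> C \<and> C \<subseteq> W" by (intro exI conjI)
qed



lemma uminus_Inf_B: "- Inf (A :: ('a \<Rightarrow> B4) set) = Sup (uminus ` A)"
proof (rule ext)
  fix x
  have "fst ((- Inf A) x) = fst (Sup (uminus ` A) x)"
    by (simp add: Inf_apply Sup_apply fst_INF fst_SUP image_image)
  moreover have "snd ((- Inf A) x) = snd (Sup (uminus ` A) x)"
    by (simp add: Inf_apply Sup_apply snd_INF snd_SUP image_image)
  ultimately show "(- Inf A) x = Sup (uminus ` A) x" by (simp add: prod_eq_iff)
qed

lemma closure_closed:
  assumes t: "is_Btop \<tau>"
  shows "- Bclosure \<tau> m \<in> \<tau>"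
proof -
  have "- Bclosure \<tau> m = Sup (uminus ` {m'. Bclosed \<tau> m' \<and> m \<le> m'})"
    unfolding Bclosure_def by (simp add: uminus_Inf_B)
  moreover have "uminus ` {m'. Bclosed \<tau> m' \<and> m \<le> m'} \<subseteq> \<tau>" unfolding Bclosed_def by blast
  moreover have "\<forall>S. S \<subseteq> \<tau> \<longrightarrow> Sup S \<in> \<tau>" using t unfolding is_Btop_def by blast
  ultimately show ?thesis by simp
qed

lemma le_closure: "m \<le> Bclosure \<tau> m"
  unfolding Bclosure_def by (rule Inf_greatest) blast

lemma Bregular_comp:
  assumes t: "is_Btop \<tau>" and p: "PI p" and r: "Bregular \<tau>"
  shows "regularc \<tau> p"
  unfolding regularc_def
proof (intro allI impI)
  fix W x assume W: "opn \<tau> p W" and xW: "x \<in> W"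
  obtain w where w: "w \<in> \<tau>" "\<And>z. z \<in> W \<longleftrightarrow> p (w z)" using W unfolding opn_iff by blast
  have weq: "w = Sup {m \<in> \<tau>. Bclosure \<tau> m \<le> w}" using r w(1) unfolding Bregular_def by blast
  have e: "w x = Sup {m \<in> \<tau>. Bclosure \<tau> m \<le> w} x" using weq by (rule arg_cong[where f="\<lambda>f. f x"])
  have "p (w x)" using w xW by blast
  then have "p (Sup {m \<in> \<tau>. Bclosure \<tau> m \<le> w} x)" by (simp only: e[symmetric])
  then obtain m where m: "m \<in> \<tau>" "Bclosure \<tau> m \<le> w" "p (m x)"
    by (auto simp: Sup_apply PI_SUP[OF p])
  define V where "V = {z. p (m z)}"
  define C where "C = {z. p (Bclosure \<tau> m z)}"
  have "opn \<tau> p V" unfolding V_def opn_def using m by blast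
  moreover have "- C = {z. p ((- Bclosure \<tau> m) z)}" unfolding C_def by (auto simp: PI_neg[OF p])
  hence "opn \<tau> p (- C)" unfolding opn_def using closure_closed[OF t] by blast
  moreover have "x \<in> V" using m V_def by blast
  moreover have "V \<subseteq> C" unfolding V_def C_def by (auto intro: PI_mono[OF p le_funD[OF le_closure]])
  moreover have "C \<subseteq> W" unfolding C_def using w(2) by (auto intro: PI_mono[OF p le_funD[OF m(2)]])
  ultimately show "\<exists>V C. opn \<tau> p V \<and> opn \<tau> p (- C) \<and> x \<in> V \<and> V \<subseteq> C \<and> C \<subseteq> W" by (intro exI conjI)
qed

lemma PI_fst: "PI fst" and PI_snd: "PI snd" unfolding PI_def by simp_all

lemma sup2_in: "is_Btop \<tau> \<Longrightarrow> a \<in> \<tau> \<Longrightarrow> b \<in> \<tau> \<Longrightarrow> sup a b \<in> \<tau>"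
proof -
  assume t: "is_Btop \<tau>" and ab: "a \<in> \<tau>" "b \<in> \<tau>"
  have "{a, b} \<subseteq> \<tau>" using ab by blast
  then have "Sup {a, b} \<in> \<tau>" using t unfolding is_Btop_def by blast
  then show ?thesis by simp
qed

lemma inf2_in: "is_Btop \<tau> \<Longrightarrow> a \<in> \<tau> \<Longrightarrow> b \<in> \<tau> \<Longrightarrow> inf a b \<in> \<tau>"
  unfolding is_Btop_def by blast

lemma const_in: "is_Btop \<tau> \<Longrightarrow> (\<lambda>_. c) \<in> \<tau>"
  unfolding is_Btop_def by blast

lemma combine:
  assumes t: "is_Btop \<tau>" and a: "a \<in> \<tau>" and b: "b \<in> \<tau>"
  shows "(\<lambda>x. (fst (a x), snd (b x))) \<in> \<tau>"
proof -
  have "sup (inf a (\<lambda>_. (True, False))) (inf b (\<lambda>_. (False, True))) = (\<lambda>x. (fst (a x), snd (b x)))"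
    by (auto simp: fun_eq_iff prod_eq_iff)
  moreover have "sup (inf a (\<lambda>_. (True, False))) (inf b (\<lambda>_. (False, True))) \<in> \<tau>"
    by (intro sup2_in inf2_in const_in t a b)
  ultimately show ?thesis by simp
qed

lemma normal_assemble:
  assumes t: "is_Btop \<tau>" and n1: "normalc \<tau> fst" and n2: "normalc \<tau> snd"
  shows "Bnormal \<tau>"
  unfolding Bnormal_def
proof (intro allI impI)
  fix l m assume l: "l \<in> \<tau>" and m: "Bclosed \<tau> m" and ml: "m \<le> l"
  have mc: "- m \<in> \<tau>" using m unfolding Bclosed_def .
  have comp: "\<exists>a c. a \<in> \<tau> \<and> c \<in> \<tau> \<and> (\<forall>z. p (m z) \<longrightarrow> p (a z)) \<and> (\<forall>z. p (a z) \<longrightarrow> \<not> p (c z))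
      \<and> (\<forall>z. \<not> p (c z) \<longrightarrow> p (l z))" if p: "PI p" and n: "normalc \<tau> p" for p
  proof -
    have o1: "opn \<tau> p {z. p (l z)}" unfolding opn_def using l by blast
    have o2: "opn \<tau> p (- {z. p (m z)})" unfolding opn_def using mc
      by (intro bexI[of _ "- m"]) (auto simp: PI_neg[OF p])
    have sub: "{z. p (m z)} \<subseteq> {z. p (l z)}" by (auto intro: PI_mono[OF p le_funD[OF ml]])
    obtain V C where VC: "opn \<tau> p V" "opn \<tau> p (- C)" "{z. p (m z)} \<subseteq> V" "V \<subseteq> C" "C \<subseteq> {z. p (l z)}"
      using n[unfolded normalc_def, rule_format, OF o1 o2 sub] by blast
    obtain a where a: "a \<in> \<tau>" "\<And>z. z \<in> V \<longleftrightarrow> p (a z)" using VC(1) unfolding opn_iff by blast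
    obtain c where c: "c \<in> \<tau>" "\<And>z. z \<in> - C \<longleftrightarrow> p (c z)" using VC(2) unfolding opn_iff by blast
    have "\<forall>z. p (m z) \<longrightarrow> p (a z)" using VC(3) a(2) by blast
    moreover have "\<forall>z. p (a z) \<longrightarrow> \<not> p (c z)" using VC(4) a(2) c(2) by blast
    moreover have "\<forall>z. \<not> p (c z) \<longrightarrow> p (l z)" using VC(5) c(2) by blast
    ultimately show ?thesis using a(1) c(1) by blast
  qed
  obtain a1 c1 where A1: "a1 \<in> \<tau>" "c1 \<in> \<tau>" "\<forall>z. fst (m z) \<longrightarrow> fst (a1 z)" "\<forall>z. fst (a1 z) \<longrightarrow> \<not> fst (c1 z)"
      "\<forall>z. \<not> fst (c1 z) \<longrightarrow> fst (l z)" using comp[OF PI_fst n1] by blast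
  obtain a2 c2 where A2: "a2 \<in> \<tau>" "c2 \<in> \<tau>" "\<forall>z. snd (m z) \<longrightarrow> snd (a2 z)" "\<forall>z. snd (a2 z) \<longrightarrow> \<not> snd (c2 z)"
      "\<forall>z. \<not> snd (c2 z) \<longrightarrow> snd (l z)" using comp[OF PI_snd n2] by blast
  define v where "v = (\<lambda>x. (fst (a1 x), snd (a2 x)))"
  define cc where "cc = (\<lambda>x. (fst (c1 x), snd (c2 x)))"
  have v: "v \<in> \<tau>" unfolding v_def by (rule combine[OF t A1(1) A2(1)])
  have "cc \<in> \<tau>" unfolding cc_def by (rule combine[OF t A1(2) A2(2)])
  hence cl: "Bclosed \<tau> (- cc)" unfolding Bclosed_def by simp
  have mv: "m \<le> v" using A1 A2 unfolding v_def by (auto simp: le_fun_def less_eq_prod_def)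
  have vc: "v \<le> - cc" using A1 A2 unfolding v_def cc_def by (auto simp: le_fun_def less_eq_prod_def)
  have cl_le: "- cc \<le> l" using A1 A2 unfolding cc_def by (auto simp: le_fun_def less_eq_prod_def)
  have "Bclosure \<tau> v \<le> - cc" unfolding Bclosure_def using cl vc by (intro Inf_lower) blast
  then show "\<exists>v'\<in>\<tau>. m \<le> v' \<and> v' \<le> Bclosure \<tau> v' \<and> Bclosure \<tau> v' \<le> l"
    using v mv le_closure[of v \<tau>] cl_le by (intro bexI[of _ v]) auto
qed

theorem mainTheorem20:
  fixes \<tau> :: "('a \<Rightarrow> B4) set"
  assumes "is_Btop \<tau>" and "Bcompact \<tau>"
  shows "(BHausdorff \<tau> \<longrightarrow> Bnormal \<tau>) \<and> (Bregular \<tau> \<longrightarrow> Bnormal \<tau>)"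
proof -
  have c1: "compactc \<tau> fst" and c2: "compactc \<tau> snd"
    using compact_comp[OF assms(1) PI_fst assms(2)] compact_comp[OF assms(1) PI_snd assms(2)] .
  have "Bnormal \<tau>" if "regularc \<tau> fst" "regularc \<tau> snd"
    using normal_assemble[OF assms(1) regular_compact_normal[OF assms(1) PI_fst c1 that(1)]
        regular_compact_normal[OF assms(1) PI_snd c2 that(2)]] .
  moreover have "regularc \<tau> fst" "regularc \<tau> snd" if "BHausdorff \<tau>"
    using R1_regular[OF assms(1) PI_fst c1] R1_regular[OF assms(1) PI_snd c2] that
    unfolding BHausdorff_def by blast+
  moreover have "regularc \<tau> fst" "regularc \<tau> snd" if "Bregular \<tau>"
    using Bregular_comp[OF assms(1) PI_fst that] Bregular_comp[OF assms(1) PI_snd that] by blast+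
  ultimately show ?thesis by blast
qed

end
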